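(* Let $R$ be a commutative associative unital ring and $B$ a unital $R$-algebra with identity $1$. Assume $B=Rb_0\oplus\mathrm{ac}(B)$ for some $b_0\in B$ such that $Rb_0$ is free with basis $\{b_0\}$. Define $\pi\colon B\to R$ by $b=\pi(b)b_0+b_{\mathrm{ac}}$ with $b_{\mathrm{ac}}\in\mathrm{ac}(B)$, and $\beta_0\colon B\times B\to R$, $\beta_0(a,b)=\pi(ab)$. Then $\beta_0\in\mathrm{IBF}_R(B)$, $(B,\beta_0)$ satisfies the IBF-principle, and $\tilde\beta_0\colon\mathrm{AC}(B)\to R$, $\bar b\mapsto\beta_0(b,1)$, is a well-defined $R$-module isomorphism.
   Context: $\mathrm{ac}(B)=(B,B,B)+[B,B]$, where $(B,B,B)$ is the additive span of all associators $(ab)c-a(bc)$ and $[B,B]$ the additive span of all commutators $ab-ba$; $\mathrm{AC}(B)=B/\mathrm{ac}(B)$. $\mathrm{IBF}_R(B)$ is the $R$-module of $R$-bilinear forms $\beta\colon B\times B\to R$ with $\beta(ab,c)=\beta(a,bc)=\beta(b,ca)$. $\mathbf{IBF}_R(B)$ is the quotient of $B\otimes_R B$ by the $R$-span of all $ab\otimes c-a\otimes bc$ and $ab\otimes c-b\otimes ca$. $(B,\beta)$ satisfies the IBF-principle if $\beta\in\mathrm{IBF}_R(B)$ and the induced map $\mathbf{IBF}_R(B)\to R$, $\overline{a\otimes b}\mapsto\beta(a,b)$, is an $R$-module isomorphism. *)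

theory Defs
  imports Main "HOL.Modules"
begin

definition unital_algebra ::
  "('r::comm_ring_1 \<Rightarrow> 'b::ab_group_add \<Rightarrow> 'b) \<Rightarrow> ('b \<Rightarrow> 'b \<Rightarrow> 'b) \<Rightarrow> 'b \<Rightarrow> bool" where
  "unital_algebra scale m e \<longleftrightarrow>
     module scale \<and>
     (\<forall>a b c. m (a + b) c = m a c + m b c) \<and>
     (\<forall>a b c. m a (b + c) = m a b + m a c) \<and>
     (\<forall>r a b. m (scale r a) b = scale r (m a b)) \<and>
     (\<forall>r a b. m a (scale r b) = scale r (m a b)) \<and>
     (\<forall>a. m e a = a \<and> m a e = a)"

inductive_set acspan :: "('b::ab_group_add \<Rightarrow> 'b \<Rightarrow> 'b) \<Rightarrow> 'b set" for m where
  assoc: "m (m a b) c - m a (m b c) \<in> acspan m"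
| comm: "m a b - m b a \<in> acspan m"
| zero: "0 \<in> acspan m"
| add: "x \<in> acspan m \<Longrightarrow> y \<in> acspan m \<Longrightarrow> x + y \<in> acspan m"
| neg: "x \<in> acspan m \<Longrightarrow> - x \<in> acspan m"

definition bilinear_form ::
  "('r::comm_ring_1 \<Rightarrow> 'b::ab_group_add \<Rightarrow> 'b) \<Rightarrow> ('b \<Rightarrow> 'b \<Rightarrow> 'r) \<Rightarrow> bool" where
  "bilinear_form scale \<beta> \<longleftrightarrow>
     (\<forall>a a' b. \<beta> (a + a') b = \<beta> a b + \<beta> a' b) \<and>
     (\<forall>a b b'. \<beta> a (b + b') = \<beta> a b + \<beta> a b') \<and>
     (\<forall>r a b. \<beta> (scale r a) b = r * \<beta> a b) \<and>
     (\<forall>r a b. \<beta> a (scale r b) = r * \<beta> a b)"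

definition ibf ::
  "('r::comm_ring_1 \<Rightarrow> 'b::ab_group_add \<Rightarrow> 'b) \<Rightarrow> ('b \<Rightarrow> 'b \<Rightarrow> 'b) \<Rightarrow> ('b \<Rightarrow> 'b \<Rightarrow> 'r) \<Rightarrow> bool" where
  "ibf scale m \<beta> \<longleftrightarrow> bilinear_form scale \<beta> \<and>
     (\<forall>a b c. \<beta> (m a b) c = \<beta> a (m b c) \<and> \<beta> (m a b) c = \<beta> b (m c a))"

text \<open>The free R-module on B x B is modelled by finitely supported functions
  B x B => R; delta p is the basis vector of p.\<close>
definition delta :: "'b \<times> 'b \<Rightarrow> 'b \<times> 'b \<Rightarrow> 'r::comm_ring_1" where
  "delta p = (\<lambda>q. if q = p then 1 else 0)"

definition finsupp :: "('b \<times> 'b \<Rightarrow> 'r::comm_ring_1) \<Rightarrow> bool" where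
  "finsupp x \<longleftrightarrow> finite {p. x p \<noteq> 0}"

text \<open>The R-submodule of the free module generated by the relations defining
  B tensor_R B (bilinearity) together with ab x c - a x bc and ab x c - b x ca.
  The quotient of the free module by it is the module IBF_R(B) (bold).\<close>
inductive_set ibf_rel ::
  "('r::comm_ring_1 \<Rightarrow> 'b::ab_group_add \<Rightarrow> 'b) \<Rightarrow> ('b \<Rightarrow> 'b \<Rightarrow> 'b) \<Rightarrow> ('b \<times> 'b \<Rightarrow> 'r) set"
  for scale m where
  addl: "(\<lambda>q. delta (a + a', b) q - delta (a, b) q - delta (a', b) q) \<in> ibf_rel scale m"
| addr: "(\<lambda>q. delta (a, b + b') q - delta (a, b) q - delta (a, b') q) \<in> ibf_rel scale m"
| scl: "(\<lambda>q. delta (scale r a, b) q - r * delta (a, b) q) \<in> ibf_rel scale m"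
| scr: "(\<lambda>q. delta (a, scale r b) q - r * delta (a, b) q) \<in> ibf_rel scale m"
| inv1: "(\<lambda>q. delta (m a b, c) q - delta (a, m b c) q) \<in> ibf_rel scale m"
| inv2: "(\<lambda>q. delta (m a b, c) q - delta (b, m c a) q) \<in> ibf_rel scale m"
| zero: "(\<lambda>q. 0) \<in> ibf_rel scale m"
| add: "x \<in> ibf_rel scale m \<Longrightarrow> y \<in> ibf_rel scale m \<Longrightarrow> (\<lambda>q. x q + y q) \<in> ibf_rel scale m"
| smult: "x \<in> ibf_rel scale m \<Longrightarrow> (\<lambda>q. r * x q) \<in> ibf_rel scale m"

definition lin_ext :: "('b \<Rightarrow> 'b \<Rightarrow> 'r::comm_ring_1) \<Rightarrow> ('b \<times> 'b \<Rightarrow> 'r) \<Rightarrow> 'r" where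
  "lin_ext \<beta> x = (\<Sum>p\<in>{p. x p \<noteq> 0}. x p * \<beta> (fst p) (snd p))"

text \<open>IBF-principle: beta in IBF_R(B) (so the induced map on the quotient is well defined)
  and the induced map IBF_R(B) -> R is bijective: surjective, and its kernel is
  exactly the relation submodule.\<close>
definition ibf_principle ::
  "('r::comm_ring_1 \<Rightarrow> 'b::ab_group_add \<Rightarrow> 'b) \<Rightarrow> ('b \<Rightarrow> 'b \<Rightarrow> 'b) \<Rightarrow> ('b \<Rightarrow> 'b \<Rightarrow> 'r) \<Rightarrow> bool" where
  "ibf_principle scale m \<beta> \<longleftrightarrow> ibf scale m \<beta> \<and>
     (\<forall>r. \<exists>x. finsupp x \<and> lin_ext \<beta> x = r) \<and>
     (\<forall>x. finsupp x \<longrightarrow> lin_ext \<beta> x = 0 \<longrightarrow> x \<in> ibf_rel scale m)"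

definition ac_coeff ::
  "('r::comm_ring_1 \<Rightarrow> 'b::ab_group_add \<Rightarrow> 'b) \<Rightarrow> ('b \<Rightarrow> 'b \<Rightarrow> 'b) \<Rightarrow> 'b \<Rightarrow> 'b \<Rightarrow> 'r" where
  "ac_coeff scale m b0 b = (THE r. \<exists>c\<in>acspan m. b = scale r b0 + c)"

end

theory Submission
  imports Defs
begin

definition req :: "('r::comm_ring_1 \<Rightarrow> 'b::ab_group_add \<Rightarrow> 'b) \<Rightarrow> ('b \<Rightarrow> 'b \<Rightarrow> 'b)
   \<Rightarrow> ('b \<times> 'b \<Rightarrow> 'r) \<Rightarrow> ('b \<times> 'b \<Rightarrow> 'r) \<Rightarrow> bool" where
  "req scale m x y \<longleftrightarrow> (\<lambda>q. x q - y q) \<in> ibf_rel scale m"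

lemma rel_neg: "x \<in> ibf_rel scale m \<Longrightarrow> (\<lambda>q. - x q) \<in> ibf_rel scale m"
  using ibf_rel.smult[of x scale m "-1"] by simp

lemma req_refl: "req scale m x x"
  unfolding req_def using ibf_rel.zero by simp

lemma req_sym: "req scale m x y \<Longrightarrow> req scale m y x"
  unfolding req_def using rel_neg[of "\<lambda>q. x q - y q" scale m] by simp

lemma req_trans: "req scale m x y \<Longrightarrow> req scale m y z \<Longrightarrow> req scale m x z"
  unfolding req_def using ibf_rel.add[of "\<lambda>q. x q - y q" scale m "\<lambda>q. y q - z q"] by simp

lemma req_add: "req scale m x x' \<Longrightarrow> req scale m y y' \<Longrightarrow>
   req scale m (\<lambda>q. x q + y q) (\<lambda>q. x' q + y' q)"
  unfolding req_def using ibf_rel.add[of "\<lambda>q. x q - x' q" scale m "\<lambda>q. y q - y' q"]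
  by (simp add: algebra_simps)

lemma req_smult: "req scale m x y \<Longrightarrow> req scale m (\<lambda>q. r * x q) (\<lambda>q. r * y q)"
  unfolding req_def using ibf_rel.smult[of "\<lambda>q. x q - y q" scale m r]
  by (simp add: algebra_simps)

lemma req_sum: "finite S \<Longrightarrow> (\<And>p. p \<in> S \<Longrightarrow> req scale m (f p) (g p)) \<Longrightarrow>
   req scale m (\<lambda>q. \<Sum>p\<in>S. f p q) (\<lambda>q. \<Sum>p\<in>S. g p q)"
proof (induction S rule: finite_induct)
  case empty
  then show ?case using req_refl by simp
next
  case (insert p S)
  then show ?case using req_add[of scale m "f p" "g p" "\<lambda>q. \<Sum>p\<in>S. f p q" "\<lambda>q. \<Sum>p\<in>S. g p q"]
    by simp
qed

lemma req_inv1: "req scale m (delta (m a b, c)) (delta (a, m b c))"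
  unfolding req_def by (rule ibf_rel.inv1)

lemma req_inv2: "req scale m (delta (m a b, c)) (delta (b, m c a))"
  unfolding req_def by (rule ibf_rel.inv2)

lemma req_addl: "req scale m (delta (a + a', b)) (\<lambda>q. delta (a, b) q + delta (a', b) q)"
  unfolding req_def using ibf_rel.addl[of a a' b scale m] by (simp add: algebra_simps)

lemma req_scl: "req scale m (delta (scale r a, b)) (\<lambda>q. r * delta (a, b) q)"
  unfolding req_def by (rule ibf_rel.scl)

locale C6 =
  fixes scale :: "'r::comm_ring_1 \<Rightarrow> 'b::ab_group_add \<Rightarrow> 'b"
    and m :: "'b \<Rightarrow> 'b \<Rightarrow> 'b" and e :: 'b and b0 :: 'b
  assumes alg: "unital_algebra scale m e"
    and spans: "\<forall>b. \<exists>r. \<exists>c\<in>acspan m. b = scale r b0 + c"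
    and direct: "\<forall>r. scale r b0 \<in> acspan m \<longrightarrow> scale r b0 = 0"
    and free: "\<forall>r. scale r b0 = 0 \<longrightarrow> r = 0"
begin

lemma modl: "module scale" using alg unfolding unital_algebra_def by blast

interpretation M: module scale by (rule modl)

lemma m_addl: "m (a + b) c = m a c + m b c" using alg unfolding unital_algebra_def by blast
lemma m_addr: "m a (b + c) = m a b + m a c" using alg unfolding unital_algebra_def by blast
lemma m_scl: "m (scale r a) b = scale r (m a b)" using alg unfolding unital_algebra_def by blast
lemma m_scr: "m a (scale r b) = scale r (m a b)" using alg unfolding unital_algebra_def by blast
lemma m_e1: "m e a = a" using alg unfolding unital_algebra_def by blast
lemma m_e2: "m a e = a" using alg unfolding unital_algebra_def by blast

lemma ac_diff: "x \<in> acspan m \<Longrightarrow> y \<in> acspan m \<Longrightarrow> x - y \<in> acspan m"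
  using acspan.add[OF _ acspan.neg[of y m], of x] by simp

lemma ac_scale: "x \<in> acspan m \<Longrightarrow> scale r x \<in> acspan m"
proof (induction rule: acspan.induct)
  case (assoc a b c)
  have "scale r (m (m a b) c - m a (m b c)) = m (m (scale r a) b) c - m (scale r a) (m b c)"
    by (simp add: m_scl M.scale_right_diff_distrib)
  then show ?case using acspan.assoc by metis
next
  case (comm a b)
  have "scale r (m a b - m b a) = m (scale r a) b - m b (scale r a)"
    by (simp add: m_scl m_scr M.scale_right_diff_distrib)
  then show ?case using acspan.comm by metis
next
  case zero then show ?case using acspan.zero by simp
next
  case (add x y) then show ?case using acspan.add by (simp add: M.scale_right_distrib)
next
  case (neg x) then show ?case using acspan.neg by simp
qed

definition pi where "pi = ac_coeff scale m b0"

lemma pi_eq: assumes "c \<in> acspan m" shows "pi (scale r b0 + c) = r"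
proof -
  have "(THE s. \<exists>c'\<in>acspan m. scale r b0 + c = scale s b0 + c') = r"
  proof (rule the_equality)
    show "\<exists>c'\<in>acspan m. scale r b0 + c = scale r b0 + c'" using assms by blast
  next
    fix s assume "\<exists>c'\<in>acspan m. scale r b0 + c = scale s b0 + c'"
    then obtain c' where c': "c' \<in> acspan m" "scale r b0 + c = scale s b0 + c'" by blast
    have "scale (s - r) b0 = c - c'" using c'(2)
      by (simp add: M.scale_left_diff_distrib algebra_simps)
    hence "scale (s - r) b0 \<in> acspan m" using ac_diff[OF assms c'(1)] by simp
    hence "scale (s - r) b0 = 0" using direct by blast
    hence "s - r = 0" using free by blast
    thus "s = r" by simp
  qed
  thus ?thesis unfolding pi_def ac_coeff_def .
qed

lemma decomp: obtains r c where "c \<in> acspan m" "b = scale r b0 + c"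
  using spans by blast

lemma pi_ac: "c \<in> acspan m \<Longrightarrow> pi c = 0"
  using pi_eq[of c 0] by simp

lemma pi_b0: "pi b0 = 1"
  using pi_eq[of 0 1, OF acspan.zero] by simp

lemma pi_add: "pi (x + y) = pi x + pi y"
proof -
  obtain r c where x: "c \<in> acspan m" "x = scale r b0 + c" by (rule decomp)
  obtain s d where y: "d \<in> acspan m" "y = scale s b0 + d" by (rule decomp)
  have "x + y = scale (r + s) b0 + (c + d)" using x y by (simp add: M.scale_left_distrib)
  thus ?thesis using pi_eq x y acspan.add by metis
qed

lemma pi_scale: "pi (scale t x) = t * pi x"
proof -
  obtain r c where x: "c \<in> acspan m" "x = scale r b0 + c" by (rule decomp)
  have "scale t x = scale (t * r) b0 + scale t c" using x by (simp add: M.scale_right_distrib)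
  thus ?thesis using pi_eq x ac_scale by metis
qed

lemma pi_diff: "a - b \<in> acspan m \<Longrightarrow> pi a = pi b"
  using pi_add[of b "a - b"] pi_ac by simp

lemma m_neg_r: "m a (- b) = - m a b"
proof -
  have "m a 0 = 0" using m_addr[of a 0 0] by simp
  hence "m a b + m a (-b) = 0" using m_addr[of a b "-b"] by simp
  thus ?thesis by (metis minus_unique)
qed

lemma m_neg_l: "m (- a) b = - m a b"
proof -
  have "m 0 b = 0" using m_addl[of 0 0 b] by simp
  hence "m a b + m (-a) b = 0" using m_addl[of a "-a" b] by simp
  thus ?thesis by (metis minus_unique)
qed

lemma m_diff_r: "m a (b - c) = m a b - m a c"
  using m_addr[of a b "-c"] m_neg_r by simp

lemma m_diff_l: "m (a - b) c = m a c - m b c"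
  using m_addl[of a "-b" c] m_neg_l by simp

lemma pi_assoc: "pi (m (m a b) c) = pi (m a (m b c))"
  by (rule pi_diff) (rule acspan.assoc)

lemma pi_comm: "pi (m a b) = pi (m b a)"
  by (rule pi_diff) (rule acspan.comm)

lemma ibf0: "ibf scale m (\<lambda>a b. pi (m a b))"
  unfolding ibf_def bilinear_form_def
  by (simp add: m_addl m_addr m_scl m_scr pi_add pi_scale pi_assoc, metis pi_assoc pi_comm)

abbreviation R where "R \<equiv> req scale m"

lemma T1: "R (delta (a, b)) (delta (m a b, e))"
  using req_sym[OF req_inv1[of scale m a b e]] by (simp add: m_e2)

lemma T2: "R (delta (a, b)) (delta (b, a))"
  using req_trans[OF T1 req_inv2[of scale m a b e]] by (simp add: m_e1)

lemma delta_diff: "R (delta (u - v, e)) (\<lambda>q. delta (u, e) q - delta (v, e) q)"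
proof -
  have "R (delta (u - v + v, e)) (\<lambda>q. delta (u - v, e) q + delta (v, e) q)" by (rule req_addl)
  hence "(\<lambda>q. delta (u, e) q - (delta (u - v, e) q + delta (v, e) q)) \<in> ibf_rel scale m"
    unfolding req_def by simp
  from rel_neg[OF this] show ?thesis unfolding req_def by (simp add: algebra_simps)
qed

lemma Z0: "R (delta (0, e)) (\<lambda>q. 0)"
proof -
  have "R (delta (0 + 0, e)) (\<lambda>q. delta (0, e) q + delta (0, e) q)" by (rule req_addl)
  hence "(\<lambda>q. - delta (0, e) q) \<in> ibf_rel scale m" unfolding req_def by simp
  from rel_neg[OF this] show ?thesis unfolding req_def by simp
qed

lemma diff0: assumes "R (delta (u,e)) (delta (v,e))" shows "R (delta (u - v, e)) (\<lambda>q. 0)"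
proof (rule req_trans[OF delta_diff])
  show "R (\<lambda>q. delta (u, e) q - delta (v, e) q) (\<lambda>q. 0)" using assms unfolding req_def by simp
qed

lemma T3: "c \<in> acspan m \<Longrightarrow> R (delta (c, e)) (\<lambda>q. 0)"
proof (induction rule: acspan.induct)
  case (assoc a b c)
  have "R (delta (m (m a b) c, e)) (delta (m a (m b c), e))"
    using req_trans[OF req_sym[OF T1] req_trans[OF req_inv1 T1]] by blast
  then show ?case by (rule diff0)
next
  case (comm a b)
  have "R (delta (m a b, e)) (delta (m b a, e))"
    using req_trans[OF req_sym[OF T1] req_trans[OF T2 T1]] by blast
  then show ?case by (rule diff0)
next
  case zero
  then show ?case by (rule Z0)
next
  case (add x y)
  then show ?case using req_trans[OF req_addl req_add[OF add.IH]] by simp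
next
  case (neg x)
  have "R (delta (x + - x, e)) (\<lambda>q. delta (x, e) q + delta (- x, e) q)" by (rule req_addl)
  hence "(\<lambda>q. delta (0, e) q - (delta (x, e) q + delta (- x, e) q)) \<in> ibf_rel scale m"
    unfolding req_def by simp
  from rel_neg[OF this] have "R (delta (- x, e)) (\<lambda>q. - delta (x, e) q + delta (0,e) q)"
    unfolding req_def by (simp add: algebra_simps)
  moreover have "R (\<lambda>q. - delta (x, e) q + delta (0,e) q) (\<lambda>q. - 0 + 0)"
    by (rule req_add[OF _ Z0]) (use req_smult[OF neg.IH, of "-1"] in simp)
  ultimately show ?case using req_trans by fastforce
qed


lemma K: "R (delta (a, b)) (\<lambda>q. pi (m a b) * delta (b0, e) q)"
proof -
  obtain r c where c: "c \<in> acspan m" "m a b = scale r b0 + c" by (rule decomp)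
  have "R (delta (m a b, e)) (\<lambda>q. delta (scale r b0, e) q + delta (c, e) q)"
    unfolding c(2) by (rule req_addl)
  moreover have "R (\<lambda>q. delta (scale r b0, e) q + delta (c, e) q) (\<lambda>q. r * delta (b0, e) q + 0)"
    by (rule req_add[OF req_scl T3[OF c(1)]])
  ultimately have "R (delta (m a b, e)) (\<lambda>q. r * delta (b0, e) q)"
    using req_trans by fastforce
  moreover have "pi (m a b) = r" using c pi_eq by simp
  ultimately show ?thesis using req_trans[OF T1] by simp
qed

lemma kernel:
  assumes fs: "finsupp x" and z: "lin_ext (\<lambda>a b. pi (m a b)) x = 0"
  shows "x \<in> ibf_rel scale m"
proof -
  define S where "S = {p. x p \<noteq> 0}"
  have fin: "finite S" using fs unfolding finsupp_def S_def .
  have xeq: "x = (\<lambda>q. \<Sum>p\<in>S. x p * delta p q)"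
  proof
    fix q
    have "(\<Sum>p\<in>S. x p * delta p q) = (\<Sum>p\<in>S. if p = q then x q else 0)"
      by (rule sum.cong) (auto simp: delta_def)
    also have "\<dots> = x q" using fin by (simp add: sum.delta S_def)
    finally show "x q = (\<Sum>p\<in>S. x p * delta p q)" by simp
  qed
  have "R (\<lambda>q. \<Sum>p\<in>S. x p * delta p q)
          (\<lambda>q. \<Sum>p\<in>S. x p * (pi (m (fst p) (snd p)) * delta (b0, e) q))"
    using fin by (rule req_sum) (rule req_smult, use K in auto)
  moreover have "(\<lambda>q. \<Sum>p\<in>S. x p * (pi (m (fst p) (snd p)) * delta (b0, e) q)) = (\<lambda>q. 0)"
  proof
    fix q
    have "(\<Sum>p\<in>S. x p * (pi (m (fst p) (snd p)) * delta (b0, e) q))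
        = (\<Sum>p\<in>S. x p * pi (m (fst p) (snd p))) * delta (b0, e) q"
      by (simp add: sum_distrib_right mult.assoc)
    also have "\<dots> = 0" using z unfolding lin_ext_def S_def by simp
    finally show "(\<Sum>p\<in>S. x p * (pi (m (fst p) (snd p)) * delta (b0, e) q)) = 0" .
  qed
  ultimately have "R x (\<lambda>q. 0)" using xeq by simp
  thus ?thesis unfolding req_def by simp
qed

lemma surj0: "\<exists>x. finsupp x \<and> lin_ext (\<lambda>a b. pi (m a b)) x = r"
proof (cases "r = 0")
  case True
  then show ?thesis
    by (intro exI[of _ "\<lambda>q. 0"]) (simp add: finsupp_def lin_ext_def)
next
  case False
  let ?x = "\<lambda>q. r * delta (b0, e) q"
  have S: "{p. ?x p \<noteq> 0} = {(b0, e)}" using False by (auto simp: delta_def)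
  have "lin_ext (\<lambda>a b. pi (m a b)) ?x = r"
    unfolding lin_ext_def S by (simp add: delta_def m_e2 pi_b0)
  moreover have "finsupp ?x" unfolding finsupp_def S by simp
  ultimately show ?thesis by blast
qed

lemma main:
  shows "ibf scale m (\<lambda>a b. ac_coeff scale m b0 (m a b))
    \<and> ibf_principle scale m (\<lambda>a b. ac_coeff scale m b0 (m a b))
    \<and> (\<forall>a b. a - b \<in> acspan m \<longrightarrow>
          ac_coeff scale m b0 (m a e) = ac_coeff scale m b0 (m b e))
    \<and> (\<forall>r a b. ac_coeff scale m b0 (m (scale r a + b) e)
          = r * ac_coeff scale m b0 (m a e) + ac_coeff scale m b0 (m b e))
    \<and> (\<forall>r. \<exists>b. ac_coeff scale m b0 (m b e) = r)
    \<and> (\<forall>b. ac_coeff scale m b0 (m b e) = 0 \<longrightarrow> b \<in> acspan m)"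
proof -
  have p6: "b \<in> acspan m" if "pi b = 0" for b
  proof -
    obtain r c where c: "c \<in> acspan m" "b = scale r b0 + c" by (rule decomp)
    have "r = 0" using that c pi_eq by simp
    thus ?thesis using c by simp
  qed
  have p5: "\<exists>b. pi b = r" for r using pi_eq[OF acspan.zero, of r] by auto
  show ?thesis
    unfolding pi_def[symmetric]
    using ibf0 surj0 kernel p6 p5 pi_diff
    by (simp add: ibf_principle_def m_e2 pi_add pi_scale)
qed

end

theorem corollary6p9:
  fixes scale :: "'r::comm_ring_1 \<Rightarrow> 'b::ab_group_add \<Rightarrow> 'b"
    and m :: "'b \<Rightarrow> 'b \<Rightarrow> 'b" and e :: 'b and b0 :: 'b
  assumes alg: "unital_algebra scale m e"
    and spans: "\<forall>b. \<exists>r. \<exists>c\<in>acspan m. b = scale r b0 + c"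
    and direct: "\<forall>r. scale r b0 \<in> acspan m \<longrightarrow> scale r b0 = 0"
    and free: "\<forall>r. scale r b0 = 0 \<longrightarrow> r = 0"
  shows "ibf scale m (\<lambda>a b. ac_coeff scale m b0 (m a b))
    \<and> ibf_principle scale m (\<lambda>a b. ac_coeff scale m b0 (m a b))
    \<and> (\<forall>a b. a - b \<in> acspan m \<longrightarrow>
          ac_coeff scale m b0 (m a e) = ac_coeff scale m b0 (m b e))
    \<and> (\<forall>r a b. ac_coeff scale m b0 (m (scale r a + b) e)
          = r * ac_coeff scale m b0 (m a e) + ac_coeff scale m b0 (m b e))
    \<and> (\<forall>r. \<exists>b. ac_coeff scale m b0 (m b e) = r)
    \<and> (\<forall>b. ac_coeff scale m b0 (m b e) = 0 \<longrightarrow> b \<in> acspan m)"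
proof -
  interpret C6 scale m e b0 using assms by (unfold_locales)
  show ?thesis by (rule main)
qed

end
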